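(* Let $\mathcal L^*$ be the optimal average cost of the original problem and $\mathcal L^*(N)$ the optimal average cost of the truncated problem with truncation level $N$. Then $\lim_{N\to\infty}\mathcal L^*(N)=\mathcal L^*$.
   Context: Fix $p,q\in(0,1)$, $\bar p=1-p$, $\bar q=1-q$. The source $\{X_t\}$ is a Markov chain on $\{0,1\}$ with $\Pr[X_{t+1}=1\mid X_t=0]=p$, $\Pr[X_{t+1}=0\mid X_t=1]=q$; channel i.i.d. Bernoulli with success probability $p_s\in(0,1]$, independent of the source, $p_f=1-p_s$. Actions $A_t\in\{0,1\}$ chosen from the history. Estimate dynamics: if $A_t=1$ and the transmission succeeds then $\hat X_{t+1}=X_{t+1}$, otherwise $\hat X_{t+1}=\hat X_t$. Original problem: age $\Delta_{t+1}=\Delta_t+1$ if $X_{t+1}\ne\hat X_{t+1}$, else $0$; state $S_t=(X_t,\hat X_t,\Delta_t)\in\mathcal S=\{(0,0,0),(1,1,0)\}\cup\{(1,0,\delta),(0,1,\delta):\delta\ge1\}$, $S_1=(0,0,0)$. Truncated problem with level $N$: age $\Delta_{t+1}=\min(\Delta_t+1,N)$ if $X_{t+1}\ne\hat X_{t+1}$, else $0$; state space $\mathcal S_N=\{(0,0,0),(1,1,0)\}\cup\{(1,0,\delta),(0,1,\delta):1\le\delta\le N\}$. In both, per-state cost $c(s)=\beta\delta$ for $s=(1,0,\delta)$, $(1-\beta)\delta$ for $s=(0,1,\delta)$, $0$ for synced states, $\beta\in[0,1]$; per-stage cost $\ell(s,a)=\mathbb E[c(S_{t+1})\mid S_t=s,A_t=a]+\lambda\mathbb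 1\{a=1\}$, $\lambda\ge0$; average cost $\limsup_{T\to\infty}\frac1T\sum_{t=1}^T\mathbb E^\pi[\ell(S_t,A_t)\mid S_1=(0,0,0)]$; optimal values are infima over all admissible policies. *)

theory Defs
  imports "HOL-Probability.Probability"
begin

text \<open>States (X_t, Xhat_t, Delta_t); bit 1 is encoded as True, bit 0 as False.\<close>
type_synonym st = "bool \<times> bool \<times> nat"

definition s_init :: st where "s_init = (False, False, 0)"

definition src_next :: "real \<Rightarrow> real \<Rightarrow> bool \<Rightarrow> bool pmf" where
  "src_next p q x = (if x then bernoulli_pmf (1 - q) else bernoulli_pmf p)"

text \<open>The function upd gives the new age when out of sync:
  Suc for the original problem, (\<lambda>d. min (Suc d) N) for the truncated problem.\<close>
definition trans :: "(nat \<Rightarrow> nat) \<Rightarrow> real \<Rightarrow> real \<Rightarrow> real \<Rightarrow> st \<Rightarrow> bool \<Rightarrow> st pmf" where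
  "trans upd p q ps s a =
     (case s of (x, xh, d) \<Rightarrow>
        bind_pmf (src_next p q x) (\<lambda>x'.
        bind_pmf (bernoulli_pmf ps) (\<lambda>succ.
          (let xh' = (if a \<and> succ then x' else xh)
           in return_pmf (x', xh', if x' \<noteq> xh' then upd d else 0)))))"

definition cost :: "real \<Rightarrow> st \<Rightarrow> real" where
  "cost \<beta> s = (case s of (x, xh, d) \<Rightarrow>
      if x \<and> \<not> xh then \<beta> * real d
      else if \<not> x \<and> xh then (1 - \<beta>) * real d
      else 0)"

definition stage_cost :: "(nat \<Rightarrow> nat) \<Rightarrow> real \<Rightarrow> real \<Rightarrow> real \<Rightarrow> real \<Rightarrow> real \<Rightarrow> st \<Rightarrow> bool \<Rightarrow> real" where
  "stage_cost upd p q ps \<beta> lam s a =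
     measure_pmf.expectation (trans upd p q ps s a) (cost \<beta>) + (if a then lam else 0)"

text \<open>Admissible (history-dependent, possibly randomized) policies: given the past
  state/action pairs and the current state, the probability of choosing A_t = 1.\<close>
type_synonym policy = "(st \<times> bool) list \<Rightarrow> st \<Rightarrow> real"

definition admissible :: "policy set" where
  "admissible = {\<pi>. \<forall>h s. 0 \<le> \<pi> h s \<and> \<pi> h s \<le> 1}"

text \<open>Joint law of (history (S_1,A_1),...,(S_t,A_t), current state S_{t+1}) under policy \<pi>;
  hist_pmf ... 0 is the point mass at ([], S_1).\<close>
primrec hist_pmf :: "(nat \<Rightarrow> nat) \<Rightarrow> real \<Rightarrow> real \<Rightarrow> real \<Rightarrow> policy \<Rightarrow> nat
                       \<Rightarrow> ((st \<times> bool) list \<times> st) pmf" where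
  "hist_pmf upd p q ps \<pi> 0 = return_pmf ([], s_init)"
| "hist_pmf upd p q ps \<pi> (Suc t) =
     bind_pmf (hist_pmf upd p q ps \<pi> t) (\<lambda>(h, s).
     bind_pmf (bernoulli_pmf (\<pi> h s)) (\<lambda>a.
     map_pmf (\<lambda>s'. (h @ [(s, a)], s')) (trans upd p q ps s a)))"

text \<open>Law of (S_{t+1}, A_{t+1}) (0-based index t).\<close>
definition sa_pmf :: "(nat \<Rightarrow> nat) \<Rightarrow> real \<Rightarrow> real \<Rightarrow> real \<Rightarrow> policy \<Rightarrow> nat \<Rightarrow> (st \<times> bool) pmf" where
  "sa_pmf upd p q ps \<pi> t =
     bind_pmf (hist_pmf upd p q ps \<pi> t) (\<lambda>(h, s).
       map_pmf (\<lambda>a. (s, a)) (bernoulli_pmf (\<pi> h s)))"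

definition exp_stage :: "(nat \<Rightarrow> nat) \<Rightarrow> real \<Rightarrow> real \<Rightarrow> real \<Rightarrow> real \<Rightarrow> real \<Rightarrow> policy \<Rightarrow> nat \<Rightarrow> real" where
  "exp_stage upd p q ps \<beta> lam \<pi> t =
     measure_pmf.expectation (sa_pmf upd p q ps \<pi> t)
       (\<lambda>(s, a). stage_cost upd p q ps \<beta> lam s a)"

definition avg_cost :: "(nat \<Rightarrow> nat) \<Rightarrow> real \<Rightarrow> real \<Rightarrow> real \<Rightarrow> real \<Rightarrow> real \<Rightarrow> policy \<Rightarrow> ereal" where
  "avg_cost upd p q ps \<beta> lam \<pi> =
     limsup (\<lambda>T. ereal ((\<Sum>t<T. exp_stage upd p q ps \<beta> lam \<pi> t) / real T))"

definition opt_cost :: "(nat \<Rightarrow> nat) \<Rightarrow> real \<Rightarrow> real \<Rightarrow> real \<Rightarrow> real \<Rightarrow> real \<Rightarrow> ereal" where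
  "opt_cost upd p q ps \<beta> lam = (INF \<pi>\<in>admissible. avg_cost upd p q ps \<beta> lam \<pi>)"

definition L_orig :: "real \<Rightarrow> real \<Rightarrow> real \<Rightarrow> real \<Rightarrow> real \<Rightarrow> ereal" where
  "L_orig p q ps \<beta> lam = opt_cost Suc p q ps \<beta> lam"

definition L_trunc :: "nat \<Rightarrow> real \<Rightarrow> real \<Rightarrow> real \<Rightarrow> real \<Rightarrow> real \<Rightarrow> ereal" where
  "L_trunc N p q ps \<beta> lam = opt_cost (\<lambda>d. min (Suc d) N) p q ps \<beta> lam"

end

theory Submission
  imports Defs
begin

lemma exp_bind_fin:
  fixes f :: "'b \<Rightarrow> real"
  assumes "finite (set_pmf M)" "\<And>x. x \<in> set_pmf M \<Longrightarrow> finite (set_pmf (N x))"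
  shows "measure_pmf.expectation (bind_pmf M N) f =
         measure_pmf.expectation M (\<lambda>x. measure_pmf.expectation (N x) f)"
proof -
  have "measure_pmf.expectation (bind_pmf M N) f = (\<Sum>a\<in>set_pmf M. pmf M a *\<^sub>R measure_pmf.expectation (N a) f)"
    by (rule pmf_expectation_bind) (use assms in auto)
  also have "\<dots> = measure_pmf.expectation M (\<lambda>x. measure_pmf.expectation (N x) f)"
    by (subst integral_measure_pmf[of "set_pmf M"]) (use assms in auto)
  finally show ?thesis .
qed

lemma fin_bool_pmf: "finite (set_pmf (M :: bool pmf))"
  by (rule finite_subset[of _ UNIV]) auto

lemma finite_trans: "finite (set_pmf (trans u p q ps s a))"
  unfolding trans_def
  by (auto simp: set_bind_pmf Let_def split: prod.splits intro!: finite_UN_I fin_bool_pmf)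


locale prm =
  fixes p q ps \<beta> lam :: real
  assumes p0: "0 < p" and p1: "p < 1" and q0: "0 < q" and q1: "q < 1"
    and ps0: "0 < ps" and ps1: "ps \<le> 1" and b0: "0 \<le> \<beta>" and b1: "\<beta> \<le> 1" and l0: "0 \<le> lam"
begin

abbreviation "pf \<equiv> 1 - ps"
definition r :: "bool \<Rightarrow> real" where "r x = (if x then q else p)"
definition w :: "bool \<Rightarrow> real" where "w x = (if x then \<beta> else 1 - \<beta>)"

lemma r_pos: "0 < r x" and r_lt1: "r x < 1" and w_nn: "0 \<le> w x" and w_le1: "w x \<le> 1"
  using p0 p1 q0 q1 b0 b1 by (auto simp: r_def w_def)

lemma exp_trans:
  "measure_pmf.expectation (trans u p q ps (x, xh, d) a) f =
    (if x then 1 - q else p) *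
      (ps * f (True, if a then True else xh, if True \<noteq> (if a then True else xh) then u d else 0)
       + (1 - ps) * f (True, xh, if True \<noteq> xh then u d else 0))
  + (1 - (if x then 1 - q else p)) *
      (ps * f (False, if a then False else xh, if False \<noteq> (if a then False else xh) then u d else 0)
       + (1 - ps) * f (False, xh, if False \<noteq> xh then u d else 0))"
proof -
  have pp: "0 \<le> (if x then 1 - q else p)" "(if x then 1 - q else p) \<le> 1"
    using p0 p1 q0 q1 by auto
  show ?thesis
    unfolding trans_def src_next_def prod.case
    apply (subst exp_bind_fin)
      apply (simp add: fin_bool_pmf)
     apply (simp add: set_bind_pmf Let_def fin_bool_pmf)
    apply (cases x)
    using pp ps0 ps1 by (auto simp: Let_def exp_bind_fin fin_bool_pmf algebra_simps)
qed

end


context prm begin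

primrec W :: "(nat \<Rightarrow> nat) \<Rightarrow> nat \<Rightarrow> st \<Rightarrow> real" where
  "W u 0 s = 0"
| "W u (Suc k) s = min
     (stage_cost u p q ps \<beta> lam s False + measure_pmf.expectation (trans u p q ps s False) (W u k))
     (stage_cost u p q ps \<beta> lam s True + measure_pmf.expectation (trans u p q ps s True) (W u k))"

definition Q :: "(nat \<Rightarrow> nat) \<Rightarrow> nat \<Rightarrow> st \<Rightarrow> bool \<Rightarrow> real" where
  "Q u k s a = stage_cost u p q ps \<beta> lam s a + measure_pmf.expectation (trans u p q ps s a) (W u k)"

lemma W_Suc: "W u (Suc k) s = min (Q u k s False) (Q u k s True)"
  by (simp add: Q_def)

lemma exp_add_fin:
  fixes f g :: "'a \<Rightarrow> real"
  assumes "finite (set_pmf M)"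
  shows "measure_pmf.expectation M (\<lambda>x. f x + g x) = measure_pmf.expectation M f + measure_pmf.expectation M g"
  by (rule Bochner_Integration.integral_add) (auto intro: integrable_measure_pmf_finite assms)

lemma Q_alt: "Q u k s a = measure_pmf.expectation (trans u p q ps s a) (\<lambda>s'. cost \<beta> s' + W u k s')
   + (if a then lam else 0)"
  unfolding Q_def stage_cost_def by (simp add: exp_add_fin finite_trans)

lemma cost_S[simp]: "cost \<beta> (x, x, d) = 0"
  by (cases x) (auto simp: cost_def)
lemma cost_O[simp]: "cost \<beta> (x, \<not> x, d) = w x * d"
  by (cases x) (auto simp: cost_def w_def)

lemma Q_S: "Q u k (x, x, 0) a = (if a then lam else 0) + (1 - r x) * W u k (x, x, 0)
   + r x * (if a then ps * W u k (\<not>x, \<not>x, 0) + pf * (w (\<not>x) * u 0 + W u k (\<not>x, x, u 0))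
            else w (\<not>x) * u 0 + W u k (\<not>x, x, u 0))"
  unfolding Q_alt exp_trans
  by (cases x; cases a) (auto simp: r_def w_def cost_def algebra_simps)

lemma Q_O: "Q u k (x, \<not>x, d) a = (if a then lam else 0) + r x * W u k (\<not>x, \<not>x, 0)
   + (1 - r x) * (if a then ps * W u k (x, x, 0) + pf * (w x * u d + W u k (x, \<not>x, u d))
            else w x * u d + W u k (x, \<not>x, u d))"
  unfolding Q_alt exp_trans
  by (cases x; cases a) (auto simp: r_def w_def cost_def algebra_simps)

end


context prm begin

lemma cost_nn: "0 \<le> cost \<beta> s"
  using b0 b1 by (auto simp: cost_def split: prod.splits)

lemma W_nn: "0 \<le> W u k s"
proof (induction k arbitrary: s)
  case 0 then show ?case by simp
next
  case (Suc k)
  have "0 \<le> Q u k s a" for a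
    unfolding Q_alt using Suc l0 cost_nn
    by (intro add_nonneg_nonneg Bochner_Integration.integral_nonneg) (auto intro: add_nonneg_nonneg)
  then show ?case by (simp only: W_Suc min_def) auto
qed

definition rmin where "rmin = min p q"
definition m1 where "m1 = 1 / ps"
definition cc where "cc = lam + m1"
definition KK where "KK = (lam + 1) / (rmin * ps) + pf * (cc / ps + m1) / ps"
definition MM where "MM = cc / ps + KK"
definition ee where "ee = \<bar>1 - p - q\<bar>"
definition c3 where "c3 = (lam + 1 + pf * (MM + m1) + KK) / (1 - ee)"

lemma rmin_pos: "0 < rmin" and rmin_le: "rmin \<le> r x"
  using p0 q0 by (auto simp: rmin_def r_def)

lemma m1_pos: "0 < m1" using ps0 by (simp add: m1_def)
lemma cc_nn: "0 \<le> cc" using m1_pos l0 by (simp add: cc_def)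
lemma KK_nn: "0 \<le> KK" using rmin_pos ps0 ps1 cc_nn m1_pos l0
  by (simp add: KK_def)
lemma MM_nn: "0 \<le> MM" using KK_nn cc_nn ps0 by (simp add: MM_def)
lemma ee_lt1: "ee < 1" using p0 p1 q0 q1 by (simp add: ee_def)
lemma c3_nn: "0 \<le> c3" using ee_lt1 KK_nn MM_nn m1_pos ps1 l0 by (simp add: c3_def)

lemma pf_m1: "pf * (1 + m1) \<le> m1"
proof -
  have "pf * (1 + m1) = (1 - ps * ps) / ps" using ps0 by (simp add: m1_def field_simps)
  also have "\<dots> \<le> 1 / ps" using ps0 by (intro divide_right_mono) auto
  finally show ?thesis by (simp add: m1_def)
qed

lemma KK_eq: "KK - pf * (1 + MM + m1) = (lam + 1) / rmin - pf"
  using ps0 rmin_pos unfolding KK_def MM_def by (simp add: field_simps)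

lemma KK_key: "lam + r x * pf * (1 + MM + m1) \<le> r x * KK"
proof -
  have "0 \<le> ps * rmin" using rmin_pos ps0 by simp
  then have "lam / rmin \<le> (lam + 1) / rmin - pf"
    using rmin_pos ps0 ps1 rmin_le[of x] r_lt1[of x]
    by (simp add: field_simps) (smt (verit) mult_nonneg_nonneg)
  also have "\<dots> = KK - pf * (1 + MM + m1)" by (simp add: KK_eq)
  finally have 1: "lam / rmin \<le> KK - pf * (1 + MM + m1)" .
  have "lam \<le> r x * (lam / rmin)"
    using rmin_pos rmin_le[of x] l0 by (simp add: field_simps mult_left_mono)
  also have "\<dots> \<le> r x * (KK - pf * (1 + MM + m1))"
    using mult_left_mono[OF 1, of "r x"] r_pos[of x] by simp
  finally show ?thesis by (simp add: algebra_simps)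
qed

lemma MM_key: "lam + r x * KK + (1 - r x) * pf * MM + m1 \<le> MM"
proof -
  have "MM * (ps + r x * pf) - cc - r x * KK = cc * r x * pf / ps + KK * ps * (1 - r x)"
    unfolding MM_def using ps0 by (simp add: field_simps)
  moreover have "0 \<le> cc * r x * pf / ps + KK * ps * (1 - r x)"
    using cc_nn KK_nn r_pos[of x] r_lt1[of x] ps0 ps1 by (intro add_nonneg_nonneg) auto
  ultimately show ?thesis by (simp add: cc_def algebra_simps)
qed

lemma c3_key: "lam + pf * (1 + MM + m1) + KK + ee * c3 \<le> c3"
proof -
  have "c3 * (1 - ee) = lam + 1 + pf * (MM + m1) + KK" using ee_lt1 by (simp add: c3_def)
  moreover have "pf * (1 + MM + m1) \<le> 1 + pf * (MM + m1)" using ps0 ps1 by (simp add: algebra_simps)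
  ultimately show ?thesis by (simp add: algebra_simps)
qed

lemma frac_le: "(0::real) \<le> c \<Longrightarrow> c \<le> 1 \<Longrightarrow> z \<le> K \<Longrightarrow> 0 \<le> K \<Longrightarrow> c * z \<le> K"
proof (cases "z \<le> 0")
  case True
  assume "0 \<le> c" "0 \<le> K"
  with True have "c * z \<le> 0" by (simp add: mult_nonneg_nonpos)
  then show ?thesis using \<open>0 \<le> K\<close> by linarith
next
  case False
  assume "0 \<le> c" "c \<le> 1" "z \<le> K"
  with False have "c * z \<le> z" by (simp add: mult_left_le_one_le)
  then show ?thesis using \<open>z \<le> K\<close> by linarith
qed

end


context prm begin

lemma step_B1:
  assumes IH1: "\<And>y d. W u k (y,y,0) \<le> W u k (y,\<not>y,d) + KK"
    and IH2: "\<And>y d. W u k (y,\<not>y,d) \<le> W u k (y,y,0) + MM + m1 * w y * d"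
    and hu0: "u 0 \<le> 1"
  shows "W u (Suc k) (x,x,0) \<le> W u (Suc k) (x,\<not>x,d) + KK"
proof -
  define A where "A = W u k (x,x,0)"
  define A' where "A' = W u k (\<not>x,\<not>x,0)"
  define Bo where "Bo = W u k (\<not>x,x,u 0)"
  define Bd where "Bd = W u k (x,\<not>x,u d)"
  define R where "R = r x"
  have R0: "0 < R" "R < 1" using r_pos r_lt1 by (auto simp: R_def)
  have wu0: "w (\<not>x) * u 0 \<le> 1" using w_le1[of "\<not>x"] w_nn[of "\<not>x"] hu0
    by (simp add: mult_le_one)
  have "m1 * w (\<not>x) * u 0 \<le> m1" using m1_pos wu0 by (simp add: mult.assoc mult_left_le)
  then have Bo_le: "Bo \<le> A' + MM + m1" using IH2[of "\<not>x" "u 0"] by (simp add: Bo_def A'_def)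
  have "R * pf * (w (\<not>x) * u 0 + Bo - A') \<le> R * pf * (1 + MM + m1)"
    using R0 ps0 ps1 wu0 Bo_le by (intro mult_left_mono) auto
  note t1 = this
  have IHd: "A \<le> Bd + KK" using IH1[of x "u d"] by (simp add: A_def Bd_def)
  have key: "lam + R * pf * (1 + MM + m1) \<le> R * KK" using KK_key[of x] by (simp add: R_def)
  have "Q u k (x,x,0) True \<le> Q u k (x,\<not>x,d) a + KK" for a
  proof (cases a)
    case True
    have "(1 - R) * (pf * (A - Bd)) \<le> (1 - R) * KK"
      using R0 ps0 ps1 IHd KK_nn by (intro mult_left_mono frac_le) auto
    moreover have "0 \<le> (1 - R) * pf * (w x * u d)" using R0 ps1 w_nn by simp
    ultimately show ?thesis using t1 key True l0
      unfolding Q_S Q_O by (simp add: A_def A'_def Bo_def Bd_def R_def algebra_simps)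
  next
    case False
    have "(1 - R) * (A - Bd) \<le> (1 - R) * KK"
      using R0 IHd by (intro mult_left_mono) auto
    moreover have "0 \<le> (1 - R) * (w x * u d)" using R0 w_nn by simp
    ultimately show ?thesis using t1 key False l0
      unfolding Q_S Q_O by (simp add: A_def A'_def Bo_def Bd_def R_def algebra_simps)
  qed
  then show ?thesis
    by (simp only: W_Suc) (smt (verit) min_def)
qed

end


context prm begin

lemma step_B2:
  assumes IH1: "\<And>y d. W u k (y,y,0) \<le> W u k (y,\<not>y,d) + KK"
    and IH2: "\<And>y d. W u k (y,\<not>y,d) \<le> W u k (y,y,0) + MM + m1 * w y * d"
    and hu: "\<And>d. u d \<le> Suc d"
  shows "W u (Suc k) (x,\<not>x,d) \<le> W u (Suc k) (x,x,0) + MM + m1 * w x * d"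
proof -
  define A where "A = W u k (x,x,0)"
  define A' where "A' = W u k (\<not>x,\<not>x,0)"
  define Bo where "Bo = W u k (\<not>x,x,u 0)"
  define Bd where "Bd = W u k (x,\<not>x,u d)"
  define R where "R = r x"
  have R0: "0 < R" "R < 1" using r_pos r_lt1 by (auto simp: R_def)
  have IHo: "A' \<le> Bo + KK" using IH1[of "\<not>x" "u 0"] by (simp add: Bo_def A'_def)
  have IHd: "Bd - A \<le> MM + m1 * w x * u d" using IH2[of x "u d"] by (simp add: A_def Bd_def)
  have c1: "(1 - R) * pf * (1 + m1) \<le> m1"
    using pf_m1 R0 ps0 ps1 m1_pos
    by (smt (verit) mult_left_le_one_le mult_nonneg_nonneg mult.commute mult.assoc)
  have wud: "w x * u d \<le> w x * d + 1"
  proof -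
    have "w x * u d \<le> w x * (d + 1)" using hu[of d] w_nn[of x] by (intro mult_left_mono) auto
    then show ?thesis using w_le1[of x] by (simp add: algebra_simps)
  qed
  have "(1 - R) * pf * (w x * u d + Bd - A) \<le> (1 - R) * pf * (w x * u d + MM + m1 * w x * u d)"
    using IHd R0 ps0 ps1 by (intro mult_left_mono) auto
  also have "\<dots> = (1 - R) * pf * MM + ((1 - R) * pf * (1 + m1)) * (w x * u d)"
    by (simp add: algebra_simps)
  also have "\<dots> \<le> (1 - R) * pf * MM + m1 * (w x * d + 1)"
    using c1 wud R0 ps0 ps1 w_nn[of x] m1_pos
    by (intro add_left_mono mult_mono) auto
  finally have t2: "(1 - R) * pf * (w x * u d + Bd - A) \<le> (1 - R) * pf * MM + m1 * w x * d + m1"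
    by (simp add: algebra_simps)
  have key: "lam + R * KK + (1 - R) * pf * MM + m1 \<le> MM" using MM_key[of x] by (simp add: R_def)
  have "Q u k (x,\<not>x,d) True \<le> Q u k (x,x,0) a + MM + m1 * w x * d" for a
  proof (cases a)
    case True
    have "R * (pf * (A' - Bo)) \<le> R * KK"
      using R0 ps0 ps1 IHo KK_nn by (intro mult_left_mono frac_le) auto
    moreover have "0 \<le> R * pf * (w (\<not>x) * u 0)" using R0 ps1 w_nn by simp
    ultimately show ?thesis using t2 key True l0
      unfolding Q_S Q_O by (simp add: A_def A'_def Bo_def Bd_def R_def algebra_simps)
  next
    case False
    have "R * (A' - Bo) \<le> R * KK"
      using R0 IHo by (intro mult_left_mono) auto
    moreover have "0 \<le> R * (w (\<not>x) * u 0)" using R0 w_nn by simp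
    ultimately show ?thesis using t2 key False l0
      unfolding Q_S Q_O by (simp add: A_def A'_def Bo_def Bd_def R_def algebra_simps)
  qed
  then show ?thesis
    by (simp only: W_Suc) (smt (verit) min_def)
qed

lemma r_sum: "r x + r (\<not>x) = p + q" by (cases x) (auto simp: r_def)

lemma step_B3:
  assumes IH1: "\<And>y d. W u k (y,y,0) \<le> W u k (y,\<not>y,d) + KK"
    and IH2: "\<And>y d. W u k (y,\<not>y,d) \<le> W u k (y,y,0) + MM + m1 * w y * d"
    and IH3: "\<And>y. W u k (y,y,0) \<le> W u k (\<not>y,\<not>y,0) + c3"
    and hu0: "u 0 \<le> 1"
  shows "W u (Suc k) (x,x,0) \<le> W u (Suc k) (\<not>x,\<not>x,0) + c3"
proof -
  define A where "A = W u k (x,x,0)"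
  define A' where "A' = W u k (\<not>x,\<not>x,0)"
  define Bo where "Bo = W u k (\<not>x,x,u 0)"
  define Bo' where "Bo' = W u k (x,\<not>x,u 0)"
  define R where "R = r x"
  define R' where "R' = r (\<not>x)"
  have R0: "0 < R" "R < 1" "0 < R'" "R' < 1" using r_pos r_lt1 by (auto simp: R_def R'_def)
  have wu0: "w (\<not>x) * u 0 \<le> 1" using w_le1[of "\<not>x"] w_nn[of "\<not>x"] hu0
    by (simp add: mult_le_one)
  have "m1 * w (\<not>x) * u 0 \<le> m1" using m1_pos wu0 by (simp add: mult.assoc mult_left_le)
  then have Bo_le: "Bo \<le> A' + MM + m1" using IH2[of "\<not>x" "u 0"] by (simp add: Bo_def A'_def)
  have "R * pf * (w (\<not>x) * u 0 + Bo - A') \<le> R * pf * (1 + MM + m1)"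
    using R0 ps0 ps1 wu0 Bo_le by (intro mult_left_mono) auto
  also have "\<dots> \<le> pf * (1 + MM + m1)"
    using R0 ps0 ps1 MM_nn m1_pos by (simp add: mult_left_le_one_le mult.assoc)
  finally have t1: "R * pf * (w (\<not>x) * u 0 + Bo - A') \<le> pf * (1 + MM + m1)" .
  have IHo: "A \<le> Bo' + KK" using IH1[of x "u 0"] by (simp add: A_def Bo'_def)
  have t3: "(1 - R - R') * (A - A') \<le> ee * c3"
  proof (cases "0 \<le> 1 - R - R'")
    case True
    then have "(1 - R - R') * (A - A') \<le> (1 - R - R') * c3"
      using IH3[of x] by (intro mult_left_mono) (auto simp: A_def A'_def)
    moreover have "1 - R - R' = 1 - p - q" using r_sum[of x] by (simp add: R_def R'_def)
    ultimately show ?thesis using True unfolding ee_def by (smt (verit))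
  next
    case False
    then have "(R + R' - 1) * (A' - A) \<le> (R + R' - 1) * c3"
      using IH3[of "\<not>x"] by (intro mult_left_mono) (auto simp: A_def A'_def)
    moreover have "R + R' - 1 = p + q - 1" using r_sum[of x] by (simp add: R_def R'_def)
    moreover have "(1 - R - R') * (A - A') = (R + R' - 1) * (A' - A)" by (simp add: algebra_simps)
    moreover have "\<bar>1 - p - q\<bar> = R + R' - 1" using False \<open>R + R' - 1 = p + q - 1\<close> by simp
    ultimately show ?thesis unfolding ee_def by simp
  qed
  have key: "lam + pf * (1 + MM + m1) + KK + ee * c3 \<le> c3" by (rule c3_key)
  have "Q u k (x,x,0) True \<le> Q u k (\<not>x,\<not>x,0) a + c3" for a
  proof (cases a)
    case True
    have "R' * (pf * (A - Bo')) \<le> KK"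
      using R0 ps0 ps1 IHo KK_nn by (intro frac_le) (auto intro: frac_le)
    moreover have "0 \<le> R' * pf * (w x * u 0)" using R0 ps1 w_nn by simp
    ultimately show ?thesis using t1 t3 key True l0
      unfolding Q_S by (simp add: A_def A'_def Bo_def Bo'_def R_def R'_def algebra_simps)
  next
    case False
    have "R' * (A - Bo') \<le> KK"
      using R0 IHo KK_nn by (intro frac_le) auto
    moreover have "0 \<le> R' * (w x * u 0)" using R0 w_nn by simp
    ultimately show ?thesis using t1 t3 key False l0
      unfolding Q_S by (simp add: A_def A'_def Bo_def Bo'_def R_def R'_def algebra_simps)
  qed
  then show ?thesis
    by (simp only: W_Suc) (smt (verit) min_def)
qed

lemma bounds:
  assumes hu: "\<And>d. u d \<le> Suc d" and hu0: "u 0 \<le> 1"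
  shows "(\<forall>y d. W u k (y,y,0) \<le> W u k (y,\<not>y,d) + KK) \<and>
         (\<forall>y d. W u k (y,\<not>y,d) \<le> W u k (y,y,0) + MM + m1 * w y * d) \<and>
         (\<forall>y. W u k (y,y,0) \<le> W u k (\<not>y,\<not>y,0) + c3)"
proof (induction k)
  case 0 then show ?case using KK_nn MM_nn m1_pos w_nn c3_nn by simp
next
  case (Suc k)
  then have IH1: "\<And>y d. W u k (y,y,0) \<le> W u k (y,\<not>y,d) + KK"
    and IH2: "\<And>y d. W u k (y,\<not>y,d) \<le> W u k (y,y,0) + MM + m1 * w y * d"
    and IH3: "\<And>y. W u k (y,y,0) \<le> W u k (\<not>y,\<not>y,0) + c3" by blast+
  show ?case using step_B1[OF IH1 IH2 hu0] step_B2[OF IH1 IH2 hu] step_B3[OF IH1 IH2 IH3 hu0]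
    by blast
qed

end


lemma bern1: "bernoulli_pmf 1 = return_pmf True"
  by (rule pmf_eqI) (auto simp: pmf_return split: split_indicator)
lemma bern0: "bernoulli_pmf 0 = return_pmf False"
  by (rule pmf_eqI) (auto simp: pmf_return split: split_indicator)
lemma bern_if: "bernoulli_pmf (if b then 1 else 0) = return_pmf b"
  by (simp add: bern1 bern0)

lemma hist_len: "(h, s) \<in> set_pmf (hist_pmf u p q ps \<pi> t) \<Longrightarrow> length h = t"
  by (induction t arbitrary: h s) (auto simp: set_bind_pmf)

lemma set_trans_sync: "(x', xh', d') \<in> set_pmf (trans u p q ps s a) \<Longrightarrow> x' = xh' \<Longrightarrow> d' = 0"
  unfolding trans_def by (auto simp: set_bind_pmf Let_def split: prod.splits if_splits)

lemma finite_hist: "finite (set_pmf (hist_pmf u p q ps \<pi> t))"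
  by (induction t) (auto simp: set_bind_pmf intro!: finite_UN_I fin_bool_pmf finite_trans split: prod.splits)

definition mpol :: "(nat \<Rightarrow> st \<Rightarrow> bool) \<Rightarrow> policy" where
  "mpol g h s = (if g (length h) s then 1 else 0)"

lemma mpol_adm: "mpol g \<in> admissible" by (auto simp: admissible_def mpol_def)

primrec mu :: "(nat \<Rightarrow> nat) \<Rightarrow> real \<Rightarrow> real \<Rightarrow> real \<Rightarrow> (nat \<Rightarrow> st \<Rightarrow> bool) \<Rightarrow> nat \<Rightarrow> st pmf" where
  "mu u p q ps g 0 = return_pmf s_init"
| "mu u p q ps g (Suc t) = bind_pmf (mu u p q ps g t) (\<lambda>s. trans u p q ps s (g t s))"

lemma finite_mu: "finite (set_pmf (mu u p q ps g t))"
  by (induction t) (auto simp: set_bind_pmf intro!: finite_UN_I finite_trans)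

lemma mu_sync: "(x, xh, d) \<in> set_pmf (mu u p q ps g t) \<Longrightarrow> x = xh \<Longrightarrow> d = 0"
  by (cases t) (auto simp: s_init_def set_bind_pmf dest: set_trans_sync)

lemma hist_mu: "map_pmf snd (hist_pmf u p q ps (mpol g) t) = mu u p q ps g t"
proof (induction t)
  case 0 then show ?case by simp
next
  case (Suc t)
  have "map_pmf snd (hist_pmf u p q ps (mpol g) (Suc t)) =
     bind_pmf (hist_pmf u p q ps (mpol g) t) (\<lambda>(h, s). trans u p q ps s (g t s))"
    unfolding hist_pmf.simps map_bind_pmf
  proof (rule bind_pmf_cong[OF refl])
    fix z assume z: "z \<in> set_pmf (hist_pmf u p q ps (mpol g) t)"
    obtain h s where [simp]: "z = (h, s)" by (cases z)
    have "length h = t" using z hist_len by simp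
    then show "map_pmf snd (case z of (h, s) \<Rightarrow> bernoulli_pmf (mpol g h s) \<bind>
          (\<lambda>a. map_pmf (\<lambda>s'. (h @ [(s, a)], s')) (trans u p q ps s a))) =
       (case z of (h, s) \<Rightarrow> trans u p q ps s (g t s))"
      by (simp add: mpol_def bern_if bind_return_pmf map_pmf_comp)
  qed
  also have "\<dots> = bind_pmf (map_pmf snd (hist_pmf u p q ps (mpol g) t)) (\<lambda>s. trans u p q ps s (g t s))"
    by (simp add: bind_map_pmf case_prod_unfold)
  finally show ?case using Suc by simp
qed

lemma exp_stage_mpol:
  "exp_stage u p q ps \<beta> lam (mpol g) t =
   measure_pmf.expectation (mu u p q ps g t) (\<lambda>s. stage_cost u p q ps \<beta> lam s (g t s))"
proof -
  have "sa_pmf u p q ps (mpol g) t = bind_pmf (hist_pmf u p q ps (mpol g) t) (\<lambda>z. return_pmf (snd z, g t (snd z)))"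
    unfolding sa_pmf_def
    by (intro bind_pmf_cong) (auto simp: mpol_def bern_if dest: hist_len)
  also have "\<dots> = map_pmf (\<lambda>s. (s, g t s)) (map_pmf snd (hist_pmf u p q ps (mpol g) t))"
    by (simp add: map_pmf_comp map_pmf_def[symmetric])
  finally have "sa_pmf u p q ps (mpol g) t = map_pmf (\<lambda>s. (s, g t s)) (mu u p q ps g t)"
    by (simp add: hist_mu)
  then show ?thesis by (simp add: exp_stage_def)
qed


context prm begin

declare W.simps(2)[simp del]

primrec Rc :: "(nat \<Rightarrow> nat) \<Rightarrow> policy \<Rightarrow> nat \<Rightarrow> (st \<times> bool) list \<Rightarrow> st \<Rightarrow> real" where
  "Rc u \<pi> 0 h s = 0"
| "Rc u \<pi> (Suc k) h s = measure_pmf.expectation (bernoulli_pmf (\<pi> h s))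
     (\<lambda>a. stage_cost u p q ps \<beta> lam s a +
          measure_pmf.expectation (trans u p q ps s a) (\<lambda>s'. Rc u \<pi> k (h @ [(s, a)]) s'))"

lemma exp_mono_fin:
  fixes f g :: "'a \<Rightarrow> real"
  assumes "finite (set_pmf M)" "\<And>x. x \<in> set_pmf M \<Longrightarrow> f x \<le> g x"
  shows "measure_pmf.expectation M f \<le> measure_pmf.expectation M g"
  using assms by (intro integral_mono_AE) (auto intro: integrable_measure_pmf_finite simp: AE_measure_pmf_iff)

lemma Rc_ge: assumes "\<pi> \<in> admissible" shows "W u k s \<le> Rc u \<pi> k h s"
proof (induction k arbitrary: h s)
  case 0 then show ?case by simp
next
  case (Suc k)
  have pi: "0 \<le> \<pi> h s" "\<pi> h s \<le> 1" using assms unfolding admissible_def mem_Collect_eq by blast+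
  define f where "f a = stage_cost u p q ps \<beta> lam s a +
          measure_pmf.expectation (trans u p q ps s a) (\<lambda>s'. Rc u \<pi> k (h @ [(s, a)]) s')" for a
  have Qf: "Q u k s a \<le> f a" for a
    unfolding Q_def f_def using Suc by (intro add_left_mono exp_mono_fin finite_trans) auto
  moreover have "W u (Suc k) s \<le> Q u k s True" "W u (Suc k) s \<le> Q u k s False"
    unfolding W_Suc by simp_all
  ultimately have "W u (Suc k) s \<le> f True" "W u (Suc k) s \<le> f False"
    using Qf[of True] Qf[of False] by linarith+
  then have "W u (Suc k) s * \<pi> h s \<le> f True * \<pi> h s"
     "W u (Suc k) s * (1 - \<pi> h s) \<le> f False * (1 - \<pi> h s)"
    using pi by (auto intro: mult_right_mono)
  then have "W u (Suc k) s \<le> f True * \<pi> h s + f False * (1 - \<pi> h s)"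
    by (simp add: algebra_simps)
  then show ?case using pi by (simp add: f_def[abs_def])
qed

lemma Rc_sum: "measure_pmf.expectation (hist_pmf u p q ps \<pi> t) (\<lambda>(h, s). Rc u \<pi> k h s)
   = (\<Sum>i<k. exp_stage u p q ps \<beta> lam \<pi> (t + i))"
proof (induction k arbitrary: t)
  case 0 then show ?case by simp
next
  case (Suc k)
  let ?H = "hist_pmf u p q ps \<pi> t"
  define F where "F = (\<lambda>(h, s). measure_pmf.expectation (bernoulli_pmf (\<pi> h s)) (\<lambda>a. stage_cost u p q ps \<beta> lam s a))"
  define G where "G = (\<lambda>(h, s). measure_pmf.expectation (bernoulli_pmf (\<pi> h s))
       (\<lambda>a. measure_pmf.expectation (trans u p q ps s a) (\<lambda>s'. Rc u \<pi> k (h @ [(s, a)]) s')))"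
  have "measure_pmf.expectation ?H (\<lambda>(h, s). Rc u \<pi> (Suc k) h s) =
        measure_pmf.expectation ?H (\<lambda>z. F z + G z)"
    by (intro Bochner_Integration.integral_cong refl)
       (auto simp: F_def G_def exp_add_fin fin_bool_pmf split: prod.splits)
  also have "\<dots> = measure_pmf.expectation ?H F + measure_pmf.expectation ?H G"
    by (rule exp_add_fin[OF finite_hist])
  also have "measure_pmf.expectation ?H F = exp_stage u p q ps \<beta> lam \<pi> t"
    unfolding exp_stage_def sa_pmf_def
    by (subst exp_bind_fin[OF finite_hist]) (auto simp: F_def case_prod_unfold fin_bool_pmf)
  also have "measure_pmf.expectation ?H G = measure_pmf.expectation (hist_pmf u p q ps \<pi> (Suc t)) (\<lambda>(h, s). Rc u \<pi> k h s)"
    unfolding hist_pmf.simps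
    apply (subst exp_bind_fin[OF finite_hist])
     apply (auto simp: set_bind_pmf case_prod_unfold intro!: finite_UN_I fin_bool_pmf finite_trans)[1]
    apply (intro Bochner_Integration.integral_cong refl)
    apply (simp add: G_def case_prod_unfold)
    apply (subst exp_bind_fin[OF fin_bool_pmf])
     apply (simp add: finite_trans)
    apply simp
    done
  also have "\<dots> = (\<Sum>i<k. exp_stage u p q ps \<beta> lam \<pi> (Suc t + i))" by (rule Suc)
  finally show ?case
    using sum.lessThan_Suc_shift[of "\<lambda>i. exp_stage u p q ps \<beta> lam \<pi> (t + i)" k] by simp
qed

lemma F1: assumes "\<pi> \<in> admissible"
  shows "W u T s_init \<le> (\<Sum>t<T. exp_stage u p q ps \<beta> lam \<pi> t)"
proof -
  have "(\<Sum>t<T. exp_stage u p q ps \<beta> lam \<pi> t) = Rc u \<pi> T [] s_init"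
    using Rc_sum[of u \<pi> 0 T] by simp
  then show ?thesis using Rc_ge[OF assms] by simp
qed

definition act :: "(nat \<Rightarrow> nat) \<Rightarrow> nat \<Rightarrow> st \<Rightarrow> bool" where
  "act u k s = (Q u k s True \<le> Q u k s False)"

lemma W_act: "W u (Suc k) s = Q u k s (act u k s)"
  by (simp only: W_Suc act_def min_def) (cases "Q u k s True \<le> Q u k s False"; auto)

lemma mu_W: assumes "\<And>s. g t s = act u k s"
  shows "measure_pmf.expectation (mu u p q ps g t) (W u (Suc k)) =
    measure_pmf.expectation (mu u p q ps g t) (\<lambda>s. stage_cost u p q ps \<beta> lam s (g t s))
    + measure_pmf.expectation (mu u p q ps g (Suc t)) (W u k)"
proof -
  have "measure_pmf.expectation (mu u p q ps g t) (W u (Suc k)) =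
    measure_pmf.expectation (mu u p q ps g t) (\<lambda>s. stage_cost u p q ps \<beta> lam s (g t s) +
       measure_pmf.expectation (trans u p q ps s (g t s)) (W u k))"
    by (rule arg_cong[where f="measure_pmf.expectation _"], rule ext) (simp add: W_act assms Q_def)
  also have "\<dots> = measure_pmf.expectation (mu u p q ps g t) (\<lambda>s. stage_cost u p q ps \<beta> lam s (g t s))
    + measure_pmf.expectation (mu u p q ps g (Suc t)) (W u k)"
    by (simp add: exp_add_fin finite_mu exp_bind_fin finite_trans)
  finally show ?thesis .
qed

end


context prm begin

declare W.simps(2)[simp del]

lemma E_S: "measure_pmf.expectation (trans u p q ps (y, y, 0) a) f = (1 - r y) * f (y, y, 0)
   + r y * (if a then ps * f (\<not>y, \<not>y, 0) + pf * f (\<not>y, y, u 0) else f (\<not>y, y, u 0))"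
  unfolding exp_trans by (cases y; cases a) (auto simp: r_def algebra_simps)

lemma E_O: "measure_pmf.expectation (trans u p q ps (y, \<not>y, d) a) f = r y * f (\<not>y, \<not>y, 0)
   + (1 - r y) * (if a then ps * f (y, y, 0) + pf * f (y, \<not>y, u d) else f (y, \<not>y, u d))"
  unfolding exp_trans by (cases y; cases a) (auto simp: r_def algebra_simps)

definition rmax where "rmax = max p q"
definition thr where "thr = KK + lam / (ps * (1 - rmax))"

lemma rmax_le: "r x \<le> rmax" and rmax_lt1: "rmax < 1"
  using p1 q1 by (auto simp: rmax_def r_def)

lemma exch:
  assumes hu: "\<And>d. u d \<le> Suc d" and hu0: "u 0 \<le> 1" and th: "thr \<le> w x * u d"
  shows "act u k (x, \<not>x, d)"
proof -
  define A where "A = W u k (x,x,0)"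
  define Bd where "Bd = W u k (x,\<not>x,u d)"
  define R where "R = r x"
  have IH: "A \<le> Bd + KK" using bounds[OF hu hu0, of k] by (simp add: A_def Bd_def)
  have R1: "0 < 1 - R" "1 - rmax \<le> 1 - R" using r_lt1 rmax_le by (auto simp: R_def)
  have rm: "0 < 1 - rmax" using rmax_lt1 by simp
  have diff: "Q u k (x,\<not>x,d) True - Q u k (x,\<not>x,d) False = lam + (1 - R) * ps * (A - w x * u d - Bd)"
    unfolding Q_O by (simp add: A_def Bd_def R_def algebra_simps)
  have "lam / (ps * (1 - rmax)) \<le> w x * u d - KK" using th by (simp add: thr_def)
  then have "(1 - R) * ps * (lam / (ps * (1 - rmax))) \<le> (1 - R) * ps * (w x * u d - KK)"
    using R1 ps0 by (intro mult_left_mono) auto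
  moreover have "(1 - R) * ps * (lam / (ps * (1 - rmax))) = lam * ((1 - R) / (1 - rmax))"
    using ps0 rm by (simp add: field_simps)
  moreover have "lam \<le> lam * ((1 - R) / (1 - rmax))"
  proof -
    have "1 \<le> (1 - R) / (1 - rmax)" using R1 rm by simp
    from mult_left_mono[OF this l0] show ?thesis by simp
  qed
  moreover have "(1 - R) * ps * (A - w x * u d - Bd) \<le> (1 - R) * ps * (KK - w x * u d)"
    using IH R1 ps0 by (intro mult_left_mono) auto
  ultimately have "Q u k (x,\<not>x,d) True - Q u k (x,\<not>x,d) False \<le> 0"
    unfolding diff by (simp add: algebra_simps)
  then show ?thesis by (simp add: act_def)
qed

definition th :: real where "th = 2 / (1 + pf)"
lemma th_gt1: "1 < th" using ps0 ps1 by (simp add: th_def)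
lemma th_pf: "pf * th < 1" using ps0 ps1 by (simp add: th_def field_simps)

definition V :: "bool \<Rightarrow> st \<Rightarrow> real" where
  "V x s = (case s of (x0, xh, d) \<Rightarrow> if x0 = x \<and> xh \<noteq> x then th ^ d else 0)"

lemma V_S[simp]: "V x (y, y, d) = 0" by (cases y; cases x) (auto simp: V_def)
lemma V_O_eq[simp]: "V x (x, \<not>x, d) = th ^ d" by (simp add: V_def)
lemma V_O_ne[simp]: "y \<noteq> x \<Longrightarrow> V x (y, z, d) = 0" by (simp add: V_def)
lemma V_nx[simp]: "V x (\<not>x, z, d) = 0" by (simp add: V_def)

lemma th_pow_mono: "m \<le> n \<Longrightarrow> th ^ m \<le> th ^ n"
  using th_gt1 by (intro power_increasing) auto

lemma V_nn: "0 \<le> V x s" using th_gt1 by (auto simp: V_def split: prod.splits)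

lemma drift_pt:
  assumes hu: "\<And>d. u d \<le> Suc d" and hu0: "u 0 \<le> 1"
    and reach: "x0 = xh \<Longrightarrow> d = 0"
    and act: "D \<le> d \<Longrightarrow> x0 = x \<Longrightarrow> xh \<noteq> x \<Longrightarrow> a"
  shows "measure_pmf.expectation (trans u p q ps (x0, xh, d) a) (V x) \<le> th ^ D + th + pf * th * V x (x0, xh, d)"
proof (cases "x0 = xh")
  case True
  then have s: "(x0, xh, d) = (x0, x0, 0)" using reach by simp
  have "th ^ (u 0) \<le> th ^ 1" using hu0 by (intro th_pow_mono) simp
  then have v: "V x (\<not>x0, x0, u 0) \<le> th" using th_gt1 by (auto simp: V_def)
  have "measure_pmf.expectation (trans u p q ps (x0, xh, d) a) (V x)
      = r x0 * (if a then pf * V x (\<not>x0, x0, u 0) else V x (\<not>x0, x0, u 0))"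
    unfolding s E_S by simp
  also have "\<dots> \<le> V x (\<not>x0, x0, u 0)"
  proof -
    define X where "X = (if a then pf * V x (\<not>x0, x0, u 0) else V x (\<not>x0, x0, u 0))"
    have v0: "0 \<le> V x (\<not>x0, x0, u 0)" by (rule V_nn)
    have "pf * V x (\<not>x0, x0, u 0) \<le> V x (\<not>x0, x0, u 0)" using v0 ps0 ps1 by (intro mult_left_le_one_le) auto
    then have 1: "X \<le> V x (\<not>x0, x0, u 0)" by (simp add: X_def)
    have "0 \<le> X" using v0 ps1 by (simp add: X_def)
    then have "r x0 * X \<le> X" using r_pos[of x0] r_lt1[of x0] by (intro mult_left_le_one_le) auto
    then show ?thesis using 1 by (simp add: X_def)
  qed
  also have "\<dots> \<le> th ^ D + th + pf * th * V x (x0, xh, d)"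
    using v th_gt1 V_nn[of x "(x0, xh, d)"] ps1 by (smt (verit) mult_nonneg_nonneg zero_le_power)
  finally show ?thesis .
next
  case False
  then have s: "xh = (\<not>x0)" by auto
  show ?thesis
  proof (cases "x0 = x")
    case False
    then have "measure_pmf.expectation (trans u p q ps (x0, xh, d) a) (V x) = 0"
      unfolding s E_O using False by simp
    then show ?thesis using th_gt1 V_nn[of x "(x0, xh, d)"] ps1
      by (smt (verit) mult_nonneg_nonneg zero_le_power)
  next
    case True
    have E: "measure_pmf.expectation (trans u p q ps (x0, xh, d) a) (V x)
        = (1 - r x) * (if a then pf * th ^ (u d) else th ^ (u d))"
      unfolding s E_O using True by simp
    have Vs: "V x (x0, xh, d) = th ^ d" using True s by simp
    have tud: "th ^ (u d) \<le> th * th ^ d" using th_pow_mono[OF hu[of d]] by simp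
    show ?thesis
    proof (cases "D \<le> d")
      case True
      then have a using act \<open>x0 = x\<close> s by auto
      have "(1 - r x) * (pf * th ^ (u d)) \<le> pf * th ^ (u d)"
        using r_pos[of x] r_lt1[of x] ps1 th_gt1 by (intro mult_left_le_one_le) auto
      also have "\<dots> \<le> pf * (th * th ^ d)" using tud ps1 by (intro mult_left_mono) auto
      finally show ?thesis using E Vs \<open>a\<close> th_gt1
        by (simp add: algebra_simps) (smt (verit) zero_le_power)
    next
      case False
      then have "th ^ (u d) \<le> th ^ D" using hu[of d] by (intro th_pow_mono) simp
      moreover have "(1 - r x) * (if a then pf * th ^ (u d) else th ^ (u d)) \<le> th ^ (u d)"
      proof -
        define X where "X = (if a then pf * th ^ (u d) else th ^ (u d))"
        have v0: "0 \<le> th ^ (u d)" using th_gt1 by simp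
        have "pf * th ^ (u d) \<le> th ^ (u d)" using v0 ps0 ps1 by (intro mult_left_le_one_le) auto
        then have 1: "X \<le> th ^ (u d)" by (simp add: X_def)
        have "0 \<le> X" using v0 ps1 by (simp add: X_def)
        then have "(1 - r x) * X \<le> X" using r_pos[of x] r_lt1[of x] by (intro mult_left_le_one_le) auto
        then show ?thesis using 1 by (simp add: X_def)
      qed
      ultimately show ?thesis using E Vs th_gt1 ps1
        by (smt (verit) mult_nonneg_nonneg zero_le_power)
    qed
  qed
qed

definition GG :: "nat \<Rightarrow> real" where "GG D = (th ^ D + th) / (1 - pf * th)"

lemma drift:
  assumes hu: "\<And>d. u d \<le> Suc d" and hu0: "u 0 \<le> 1"
    and act: "\<And>t d. D \<le> d \<Longrightarrow> g t (x, \<not>x, d)"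
  shows "measure_pmf.expectation (mu u p q ps g t) (V x) \<le> GG D"
proof (induction t)
  have G0: "0 \<le> GG D" using th_gt1 th_pf by (simp add: GG_def)
  case 0 then show ?case using G0 by (simp add: V_def s_init_def)
next
  case (Suc t)
  have "measure_pmf.expectation (mu u p q ps g (Suc t)) (V x) =
     measure_pmf.expectation (mu u p q ps g t) (\<lambda>s. measure_pmf.expectation (trans u p q ps s (g t s)) (V x))"
    by (simp add: exp_bind_fin finite_mu finite_trans)
  also have "\<dots> \<le> measure_pmf.expectation (mu u p q ps g t) (\<lambda>s. th ^ D + th + pf * th * V x s)"
  proof (rule exp_mono_fin[OF finite_mu])
    fix s assume s: "s \<in> set_pmf (mu u p q ps g t)"
    obtain x0 xh d where sd: "s = (x0, xh, d)" by (cases s)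
    show "measure_pmf.expectation (trans u p q ps s (g t s)) (V x) \<le> th ^ D + th + pf * th * V x s"
      unfolding sd
      by (rule drift_pt[OF hu hu0]) (use s sd mu_sync act in auto)
  qed
  also have "\<dots> = th ^ D + th + pf * th * measure_pmf.expectation (mu u p q ps g t) (V x)"
    by (simp add: exp_add_fin finite_mu)
  also have "\<dots> \<le> th ^ D + th + pf * th * GG D"
    using Suc ps1 th_gt1 by (intro add_left_mono mult_left_mono) auto
  also have "\<dots> = GG D" using th_pf by (simp add: GG_def field_simps)
  finally show ?case .
qed

end


context prm begin

declare W.simps(2)[simp del]

lemma cost_le_V: "cost \<beta> s \<le> (w True * V True s + w False * V False s) / (th - 1)"
proof -
  obtain x0 xh d where s: "s = (x0, xh, d)" by (cases s)
  have th1: "0 < th - 1" using th_gt1 by simp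
  show ?thesis
  proof (cases "xh = x0")
    case True
    then show ?thesis using s th1 w_nn V_nn by (auto intro!: divide_nonneg_pos add_nonneg_nonneg mult_nonneg_nonneg)
  next
    case False
    then have xh: "xh = (\<not>x0)" by auto
    have "1 + real d * (th - 1) \<le> (1 + (th - 1)) ^ d" by (rule Bernoulli_inequality) (use th1 in simp)
    then have "real d * (th - 1) \<le> th ^ d" by simp
    then have dle: "real d \<le> th ^ d / (th - 1)" using th1 by (simp add: field_simps)
    have "cost \<beta> s = w x0 * d" using s xh by simp
    also have "\<dots> \<le> w x0 * (th ^ d / (th - 1))" using dle w_nn by (intro mult_left_mono) auto
    also have "\<dots> = (w True * V True s + w False * V False s) / (th - 1)"
      using s xh by (cases x0) (auto simp: V_def)
    finally show ?thesis .
  qed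
qed

lemma wV_bound:
  assumes hu: "\<And>d. u d \<le> Suc d" and hu0: "u 0 \<le> 1"
    and act: "\<And>x t d. 0 < w x \<Longrightarrow> D \<le> d \<Longrightarrow> g t (x, \<not>x, d)"
  shows "w x * measure_pmf.expectation (mu u p q ps g t) (V x) \<le> GG D"
proof (cases "0 < w x")
  case True
  have "measure_pmf.expectation (mu u p q ps g t) (V x) \<le> GG D"
    by (rule drift[OF hu hu0]) (use act True in auto)
  moreover have "0 \<le> measure_pmf.expectation (mu u p q ps g t) (V x)"
    using V_nn by (intro Bochner_Integration.integral_nonneg) auto
  ultimately show ?thesis using w_le1[of x] w_nn[of x] by (smt (verit) mult_left_le_one_le)
next
  case False
  then have "w x = 0" using w_nn[of x] by simp
  then show ?thesis using th_gt1 th_pf by (simp add: GG_def)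
qed

lemma Ecost_bound:
  assumes hu: "\<And>d. u d \<le> Suc d" and hu0: "u 0 \<le> 1"
    and act: "\<And>x t d. 0 < w x \<Longrightarrow> D \<le> d \<Longrightarrow> g t (x, \<not>x, d)"
  shows "measure_pmf.expectation (mu u p q ps g t) (cost \<beta>) \<le> 2 * GG D / (th - 1)"
proof -
  have th1: "0 < th - 1" using th_gt1 by simp
  have wb: "w x * measure_pmf.expectation (mu u p q ps g t) (V x) \<le> GG D" for x
    by (rule wV_bound[OF hu hu0], rule act)
  have "measure_pmf.expectation (mu u p q ps g t) (cost \<beta>) \<le>
     measure_pmf.expectation (mu u p q ps g t) (\<lambda>s. (w True * V True s + w False * V False s) / (th - 1))"
    by (rule exp_mono_fin[OF finite_mu]) (rule cost_le_V)
  also have "\<dots> = (w True * measure_pmf.expectation (mu u p q ps g t) (V True)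
       + w False * measure_pmf.expectation (mu u p q ps g t) (V False)) / (th - 1)"
    by (simp add: exp_add_fin finite_mu)
  also have "\<dots> \<le> (GG D + GG D) / (th - 1)"
    using th1 wb[of True] wb[of False]
    by (intro divide_right_mono add_mono) auto
  finally show ?thesis by simp
qed

lemma W0: "W u 0 = (\<lambda>_. 0)" by (rule ext) simp

definition blk :: "(nat \<Rightarrow> nat) \<Rightarrow> nat \<Rightarrow> nat \<Rightarrow> st \<Rightarrow> bool" where
  "blk u T t s = act u (T - Suc (t mod T)) s"

lemma blk_partial:
  assumes T: "0 < T"
  shows "i \<le> T \<Longrightarrow> measure_pmf.expectation (mu u p q ps (blk u T) (b * T)) (W u T) =
     (\<Sum>i'<i. exp_stage u p q ps \<beta> lam (mpol (blk u T)) (b * T + i'))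
     + measure_pmf.expectation (mu u p q ps (blk u T) (b * T + i)) (W u (T - i))"
proof (induction i)
  case 0 then show ?case by simp
next
  case (Suc i)
  then have i: "i < T" by simp
  have m: "(b * T + i) mod T = i" using i by simp
  have "T - i = Suc (T - Suc i)" using i by simp
  then have "measure_pmf.expectation (mu u p q ps (blk u T) (b * T + i)) (W u (T - i)) =
     measure_pmf.expectation (mu u p q ps (blk u T) (b * T + i)) (\<lambda>s. stage_cost u p q ps \<beta> lam s (blk u T (b * T + i) s))
     + measure_pmf.expectation (mu u p q ps (blk u T) (Suc (b * T + i))) (W u (T - Suc i))"
    using mu_W[of "blk u T" "b * T + i" u "T - Suc i"] m by (simp add: blk_def)
  then show ?case using Suc i by (simp add: exp_stage_mpol)
qed

lemma blk_block:
  assumes T: "0 < T"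
  shows "measure_pmf.expectation (mu u p q ps (blk u T) (b * T)) (W u T) =
     (\<Sum>i<T. exp_stage u p q ps \<beta> lam (mpol (blk u T)) (b * T + i))"
  using blk_partial[OF T, where i=T and b=b and u=u] by (simp add: W0)

lemma sum_split: "(\<Sum>t<(a::nat) + (n::nat). f t) = (\<Sum>t<a. f t) + (\<Sum>i<n. (f (a + i) :: real))"
  by (induction n) (auto simp: add.assoc)

lemma blk_sum:
  assumes T: "0 < T"
  shows "(\<Sum>t<(jj * T). exp_stage u p q ps \<beta> lam (mpol (blk u T)) t) =
     (\<Sum>bb<jj. measure_pmf.expectation (mu u p q ps (blk u T) (bb * T)) (W u T))"
proof (induction jj)
  case 0 then show ?case by simp
next
  case (Suc jj)
  have "(\<Sum>t<(Suc jj * T). exp_stage u p q ps \<beta> lam (mpol (blk u T)) t) =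
     (\<Sum>t<(jj * T). exp_stage u p q ps \<beta> lam (mpol (blk u T)) t)
     + (\<Sum>i<T. exp_stage u p q ps \<beta> lam (mpol (blk u T)) (jj * T + i))"
    using sum_split[where a="jj * T" and n=T] by (simp add: add.commute)
  then show ?case using Suc blk_block[OF T, where b=jj and u=u] by simp
qed

lemma span:
  assumes hu: "\<And>d. u d \<le> Suc d" and hu0: "u 0 \<le> 1"
    and reach: "x0 = xh \<Longrightarrow> d = 0"
  shows "W u k (x0, xh, d) \<le> W u k s_init + c3 + MM + m1 * cost \<beta> (x0, xh, d)"
proof -
  note B = bounds[OF hu hu0, of k]
  have "W u k (True, True, 0) \<le> W u k (False, False, 0) + c3"
    using B[THEN conjunct2, THEN conjunct2, rule_format, of True] by simp
  then have sync: "W u k (y, y, 0) \<le> W u k s_init + c3" for y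
    using c3_nn by (cases y) (auto simp: s_init_def)
  show ?thesis
  proof (cases "x0 = xh")
    case True
    then show ?thesis using reach sync[of x0] MM_nn by simp
  next
    case False
    then have xh: "xh = (\<not>x0)" by auto
    have "W u k (x0, \<not>x0, d) \<le> W u k (x0, x0, 0) + MM + m1 * w x0 * d" using B by blast
    then show ?thesis using xh sync[of x0] by (simp add: algebra_simps)
  qed
qed

lemma exp_stage_nn: "0 \<le> exp_stage u p q ps \<beta> lam \<pi> t"
  unfolding exp_stage_def stage_cost_def
  using cost_nn l0
  by (intro Bochner_Integration.integral_nonneg) (auto intro!: add_nonneg_nonneg Bochner_Integration.integral_nonneg)

end


definition uN :: "nat \<Rightarrow> nat \<Rightarrow> nat" where "uN N = (\<lambda>d. min (Suc d) N)"
definition tau :: "nat \<Rightarrow> st \<Rightarrow> st" where "tau N s = (case s of (x, xh, d) \<Rightarrow> (x, xh, min d N))"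

lemma tau_init[simp]: "tau N s_init = s_init" by (simp add: tau_def s_init_def)

lemma trans_tau: "map_pmf (tau N) (trans Suc p q ps s a) = trans (uN N) p q ps (tau N s) a"
proof -
  obtain x xh d where s: "s = (x, xh, d)" by (cases s)
  have m: "min (Suc (min d N)) N = min (Suc d) N" by simp
  show ?thesis unfolding s trans_def tau_def uN_def
    by (simp add: map_bind_pmf Let_def) (intro bind_pmf_cong refl; auto simp: m)
qed

lemma mu_tau: "map_pmf (tau N) (mu Suc p q ps (\<lambda>t s. g t (tau N s)) t) = mu (uN N) p q ps g t"
proof (induction t)
  case 0 then show ?case by simp
next
  case (Suc t)
  have "map_pmf (tau N) (mu Suc p q ps (\<lambda>t s. g t (tau N s)) (Suc t)) =
     bind_pmf (mu Suc p q ps (\<lambda>t s. g t (tau N s)) t) (\<lambda>s. trans (uN N) p q ps (tau N s) (g t (tau N s)))"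
    by (simp add: map_bind_pmf trans_tau)
  also have "\<dots> = bind_pmf (map_pmf (tau N) (mu Suc p q ps (\<lambda>t s. g t (tau N s)) t)) (\<lambda>s. trans (uN N) p q ps s (g t s))"
    by (simp add: bind_map_pmf)
  finally show ?case using Suc by simp
qed

context prm begin

declare W.simps(2)[simp del]

definition ex :: "nat \<Rightarrow> st \<Rightarrow> real" where "ex N s = cost \<beta> s - cost \<beta> (tau N s)"

lemma stage_tau: "stage_cost Suc p q ps \<beta> lam s a =
   stage_cost (uN N) p q ps \<beta> lam (tau N s) a + measure_pmf.expectation (trans Suc p q ps s a) (ex N)"
proof -
  have "measure_pmf.expectation (trans Suc p q ps s a) (cost \<beta>) =
     measure_pmf.expectation (trans Suc p q ps s a) (\<lambda>s. cost \<beta> (tau N s) + ex N s)"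
    by (simp add: ex_def)
  also have "\<dots> = measure_pmf.expectation (map_pmf (tau N) (trans Suc p q ps s a)) (cost \<beta>)
      + measure_pmf.expectation (trans Suc p q ps s a) (ex N)"
    by (simp add: exp_add_fin finite_trans)
  finally show ?thesis unfolding stage_cost_def trans_tau by simp
qed

lemma exp_stage_tau:
  "exp_stage Suc p q ps \<beta> lam (mpol (\<lambda>t s. g t (tau N s))) t =
   exp_stage (uN N) p q ps \<beta> lam (mpol g) t
   + measure_pmf.expectation (mu Suc p q ps (\<lambda>t s. g t (tau N s)) (Suc t)) (ex N)"
proof -
  let ?m = "mu Suc p q ps (\<lambda>t s. g t (tau N s)) t"
  have "exp_stage Suc p q ps \<beta> lam (mpol (\<lambda>t s. g t (tau N s))) t =
     measure_pmf.expectation ?m (\<lambda>s. stage_cost (uN N) p q ps \<beta> lam (tau N s) (g t (tau N s))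
        + measure_pmf.expectation (trans Suc p q ps s (g t (tau N s))) (ex N))"
    unfolding exp_stage_mpol by (subst stage_tau[where N=N]) simp
  also have "\<dots> = measure_pmf.expectation (map_pmf (tau N) ?m) (\<lambda>s. stage_cost (uN N) p q ps \<beta> lam s (g t s))
      + measure_pmf.expectation (mu Suc p q ps (\<lambda>t s. g t (tau N s)) (Suc t)) (ex N)"
    by (simp add: exp_add_fin finite_mu exp_bind_fin finite_trans)
  finally show ?thesis by (simp add: mu_tau exp_stage_mpol)
qed

lemma ex_le_V: "ex N s \<le> (w True * V True s + w False * V False s) / (th ^ N * (th - 1))"
proof -
  obtain x0 xh d where s: "s = (x0, xh, d)" by (cases s)
  have th1: "0 < th - 1" using th_gt1 by simp
  have thN: "0 < th ^ N" using th_gt1 by simp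
  have rhs_nn: "0 \<le> (w True * V True s + w False * V False s) / (th ^ N * (th - 1))"
    using th1 thN w_nn V_nn by (intro divide_nonneg_pos add_nonneg_nonneg mult_nonneg_nonneg) auto
  show ?thesis
  proof (cases "xh = x0")
    case True
    then show ?thesis using s rhs_nn by (simp add: ex_def tau_def)
  next
    case False
    then have xh: "xh = (\<not>x0)" by auto
    show ?thesis
    proof (cases "d \<le> N")
      case True
      then show ?thesis using s xh rhs_nn by (simp add: ex_def tau_def)
    next
      case False
      define m where "m = d - N"
      have dm: "d = N + m" using False by (simp add: m_def)
      have "1 + real m * (th - 1) \<le> (1 + (th - 1)) ^ m" by (rule Bernoulli_inequality) (use th1 in simp)
      then have "real m * (th - 1) \<le> th ^ m" by simp
      then have mle: "real m \<le> th ^ m / (th - 1)" using th1 by (simp add: field_simps)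
      have eq1: "th ^ m / (th - 1) = th ^ d / (th ^ N * (th - 1))"
        using dm thN th1 by (simp add: power_add)
      have "ex N s = w x0 * m" using s xh dm by (simp add: ex_def tau_def algebra_simps)
      also have "\<dots> \<le> w x0 * (th ^ m / (th - 1))" using mle w_nn by (intro mult_left_mono) auto
      also have "\<dots> = w x0 * (th ^ d / (th ^ N * (th - 1)))" by (simp only: eq1)
      also have "\<dots> = (w True * V True s + w False * V False s) / (th ^ N * (th - 1))"
        using s xh by (cases x0) (auto simp: V_def)
      finally show ?thesis .
    qed
  qed
qed

lemma Eex_bound:
  assumes act: "\<And>x t d. 0 < w x \<Longrightarrow> D \<le> d \<Longrightarrow> g t (x, \<not>x, d)"
  shows "measure_pmf.expectation (mu Suc p q ps g t) (ex N) \<le> 2 * GG D / (th ^ N * (th - 1))"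
proof -
  have th1: "0 < th ^ N * (th - 1)" using th_gt1 by simp
  have wb: "w x * measure_pmf.expectation (mu Suc p q ps g t) (V x) \<le> GG D" for x
    by (rule wV_bound, simp, simp, rule act)
  have "measure_pmf.expectation (mu Suc p q ps g t) (ex N) \<le>
     measure_pmf.expectation (mu Suc p q ps g t) (\<lambda>s. (w True * V True s + w False * V False s) / (th ^ N * (th - 1)))"
    by (rule exp_mono_fin[OF finite_mu]) (rule ex_le_V)
  also have "\<dots> = (w True * measure_pmf.expectation (mu Suc p q ps g t) (V True)
       + w False * measure_pmf.expectation (mu Suc p q ps g t) (V False)) / (th ^ N * (th - 1))"
    by (simp add: exp_add_fin finite_mu)
  also have "\<dots> \<le> (GG D + GG D) / (th ^ N * (th - 1))"
    using th1 wb[of True] wb[of False]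
    by (intro divide_right_mono add_mono) auto
  finally show ?thesis by simp
qed

end


lemma limsup_upper:
  assumes "\<And>M. 1 \<le> M \<Longrightarrow> x M \<le> a + b / real M"
  shows "limsup (\<lambda>M. ereal (x M)) \<le> ereal a"
proof -
  have "limsup (\<lambda>M. ereal (x M)) \<le> limsup (\<lambda>M. ereal (a + b / real M))"
    by (intro Limsup_mono eventually_sequentiallyI[of 1]) (use assms in auto)
  also have "\<dots> = ereal a"
  proof (rule lim_imp_Limsup)
    show "((\<lambda>M. ereal (a + b / real M)) \<longlongrightarrow> ereal a) sequentially"
      using tendsto_add[OF tendsto_const[of a] lim_const_over_n[of b]] by (simp add: tendsto_ereal)
  qed simp
  finally show ?thesis .
qed

lemma limsup_lower:
  assumes "\<And>M. 1 \<le> M \<Longrightarrow> a - b / real M \<le> x M"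
  shows "ereal a \<le> limsup (\<lambda>M. ereal (x M))"
proof -
  have "ereal a = limsup (\<lambda>M. ereal (a - b / real M))"
  proof (rule lim_imp_Limsup[symmetric])
    show "((\<lambda>M. ereal (a - b / real M)) \<longlongrightarrow> ereal a) sequentially"
      using tendsto_diff[OF tendsto_const[of a] lim_const_over_n[of b]] by (simp add: tendsto_ereal)
  qed simp
  also have "\<dots> \<le> limsup (\<lambda>M. ereal (x M))"
    by (intro Limsup_mono eventually_sequentiallyI[of 1]) (use assms in auto)
  finally show ?thesis .
qed

context prm begin

declare W.simps(2)[simp del]

definition Dx :: "bool \<Rightarrow> nat" where "Dx x = nat \<lceil>thr / w x\<rceil>"
definition D0 :: nat where "D0 = max (Dx True) (Dx False)"

lemma thr_D0: assumes "0 < w x" "D0 \<le> n" shows "thr \<le> w x * real n"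
proof -
  have "thr / w x \<le> real (Dx x)" unfolding Dx_def by (rule real_nat_ceiling_ge)
  also have "\<dots> \<le> real n" using assms(2) by (cases x) (auto simp: D0_def)
  finally show ?thesis using assms(1) by (simp add: field_simps)
qed

lemma uN_hu: "uN N d \<le> Suc d" by (simp add: uN_def)
lemma uN_hu0: "uN N 0 \<le> 1" by (simp add: uN_def)

lemma blk_act:
  assumes "D0 \<le> N" "0 < w x" "D0 \<le> d"
  shows "blk (uN N) T t (x, \<not>x, d)"
  unfolding blk_def
  by (rule exch[OF uN_hu uN_hu0]) (rule thr_D0, use assms in \<open>auto simp: uN_def\<close>)

definition Phi where "Phi = c3 + MM + m1 * (2 * GG D0 / (th - 1))"
definition eps :: "nat \<Rightarrow> real" where "eps N = 2 * GG D0 / (th ^ N * (th - 1))"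

lemma GG_nn: "0 \<le> GG D" using th_gt1 th_pf by (simp add: GG_def)
lemma Phi_nn: "0 \<le> Phi" unfolding Phi_def using c3_nn MM_nn m1_pos GG_nn th_gt1
  by (intro add_nonneg_nonneg mult_nonneg_nonneg divide_nonneg_pos) auto

lemma block_bound:
  assumes "D0 \<le> N"
  shows "measure_pmf.expectation (mu (uN N) p q ps (blk (uN N) T) t) (W (uN N) T)
         \<le> W (uN N) T s_init + Phi"
proof -
  let ?m = "mu (uN N) p q ps (blk (uN N) T) t"
  have "measure_pmf.expectation ?m (W (uN N) T) \<le>
     measure_pmf.expectation ?m (\<lambda>s. (W (uN N) T s_init + c3 + MM) + m1 * cost \<beta> s)"
  proof (rule exp_mono_fin[OF finite_mu])
    fix s assume s: "s \<in> set_pmf ?m"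
    obtain x0 xh d where sd: "s = (x0, xh, d)" by (cases s)
    have "W (uN N) T (x0, xh, d) \<le> W (uN N) T s_init + c3 + MM + m1 * cost \<beta> (x0, xh, d)"
      by (rule span) (use mu_sync s sd in \<open>auto simp: uN_def\<close>)
    then show "W (uN N) T s \<le> (W (uN N) T s_init + c3 + MM) + m1 * cost \<beta> s"
      using sd by simp
  qed
  also have "\<dots> = (W (uN N) T s_init + c3 + MM) + m1 * measure_pmf.expectation ?m (cost \<beta>)"
    by (simp add: exp_add_fin finite_mu)
  also have "\<dots> \<le> (W (uN N) T s_init + c3 + MM) + m1 * (2 * GG D0 / (th - 1))"
  proof -
    have "measure_pmf.expectation ?m (cost \<beta>) \<le> 2 * GG D0 / (th - 1)"
      by (rule Ecost_bound[OF uN_hu uN_hu0], rule blk_act[OF assms])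
    then show ?thesis using m1_pos by (intro add_left_mono mult_left_mono) auto
  qed
  finally show ?thesis by (simp add: Phi_def algebra_simps)
qed

lemma sum_bound_trunc:
  assumes "D0 \<le> N" "0 < T"
  shows "(\<Sum>t<M. exp_stage (uN N) p q ps \<beta> lam (mpol (blk (uN N) T)) t)
     \<le> (real M / real T + 1) * (W (uN N) T s_init + Phi)"
proof -
  define j where "j = M div T + 1"
  define C where "C = W (uN N) T s_init + Phi"
  have C0: "0 \<le> C" using W_nn Phi_nn by (simp add: C_def)
  have MjT: "M \<le> j * T" unfolding j_def using assms(2)
    by (metis add.commute div_mult_mod_eq le_add1 less_imp_le_nat mod_less_divisor add_mult_distrib mult_1 nat_add_left_cancel_le)
  have "(\<Sum>t<M. exp_stage (uN N) p q ps \<beta> lam (mpol (blk (uN N) T)) t)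
      \<le> (\<Sum>t<(j * T). exp_stage (uN N) p q ps \<beta> lam (mpol (blk (uN N) T)) t)"
    using MjT by (intro sum_mono2) (auto simp: exp_stage_nn)
  also have "\<dots> = (\<Sum>b<j. measure_pmf.expectation (mu (uN N) p q ps (blk (uN N) T) (b * T)) (W (uN N) T))"
    by (rule blk_sum[OF assms(2)])
  also have "\<dots> \<le> (\<Sum>b<j. C)"
    by (intro sum_mono) (use block_bound[OF assms(1)] in \<open>simp add: C_def\<close>)
  also have "\<dots> = real j * C" by simp
  also have "\<dots> \<le> (real M / real T + 1) * C"
  proof -
    have "real (M div T) \<le> real M / real T" by (rule of_nat_div_le_of_nat)
    then have "real j \<le> real M / real T + 1" by (simp add: j_def)
    then show ?thesis using C0 by (intro mult_right_mono) auto
  qed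
  finally show ?thesis by (simp add: C_def)
qed

end


context prm begin

declare W.simps(2)[simp del]

lemma L_trunc_eq: "L_trunc N p q ps \<beta> lam = opt_cost (uN N) p q ps \<beta> lam"
  by (simp add: L_trunc_def uN_def)

lemma avg_le_sum:
  assumes "\<And>M. (\<Sum>t<M. exp_stage u p q ps \<beta> lam \<pi> t) \<le> (real M / real T + 1) * C + real M * e"
    and "0 < T"
  shows "avg_cost u p q ps \<beta> lam \<pi> \<le> ereal (C / T + e)"
  unfolding avg_cost_def
proof (rule limsup_upper[where b=C])
  fix M :: nat assume M: "1 \<le> M"
  have "(\<Sum>t<M. exp_stage u p q ps \<beta> lam \<pi> t) / real M \<le> ((real M / real T + 1) * C + real M * e) / real M"
    using assms(1)[of M] M by (intro divide_right_mono) auto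
  also have "\<dots> = C / T + e + C / real M" using M assms(2) by (simp add: field_simps)
  finally show "(\<Sum>t<M. exp_stage u p q ps \<beta> lam \<pi> t) / real M \<le> C / T + e + C / real M" .
qed

lemma L_trunc_upper:
  assumes "D0 \<le> N" "0 < T"
  shows "L_trunc N p q ps \<beta> lam \<le> ereal ((W (uN N) T s_init + Phi) / T)"
proof -
  have "L_trunc N p q ps \<beta> lam \<le> avg_cost (uN N) p q ps \<beta> lam (mpol (blk (uN N) T))"
    unfolding L_trunc_eq opt_cost_def by (rule INF_lower[OF mpol_adm])
  also have "\<dots> \<le> ereal ((W (uN N) T s_init + Phi) / T + 0)"
    by (rule avg_le_sum[OF _ assms(2)]) (use sum_bound_trunc[OF assms] in simp)
  finally show ?thesis by simp
qed

lemma L_orig_upper: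
  assumes "D0 \<le> N" "0 < T"
  shows "L_orig p q ps \<beta> lam \<le> ereal ((W (uN N) T s_init + Phi) / T + eps N)"
proof -
  define g where "g = (\<lambda>t s. blk (uN N) T t (tau N s))"
  have gact: "g t (x, \<not>x, d)" if "0 < w x" "D0 \<le> d" for x t d
    unfolding g_def tau_def using blk_act[OF assms(1) that(1)] that(2) assms(1) by simp
  have "L_orig p q ps \<beta> lam \<le> avg_cost Suc p q ps \<beta> lam (mpol g)"
    unfolding L_orig_def opt_cost_def by (rule INF_lower[OF mpol_adm])
  also have "\<dots> \<le> ereal ((W (uN N) T s_init + Phi) / T + eps N)"
  proof (rule avg_le_sum[OF _ assms(2)])
    fix M
    have "(\<Sum>t<M. exp_stage Suc p q ps \<beta> lam (mpol g) t) =
       (\<Sum>t<M. exp_stage (uN N) p q ps \<beta> lam (mpol (blk (uN N) T)) t)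
       + (\<Sum>t<M. measure_pmf.expectation (mu Suc p q ps g (Suc t)) (ex N))"
      unfolding g_def exp_stage_tau by (simp add: sum.distrib)
    also have "\<dots> \<le> (real M / real T + 1) * (W (uN N) T s_init + Phi) + (\<Sum>t<M. eps N)"
    proof (intro add_mono sum_mono)
      show "(\<Sum>t<M. exp_stage (uN N) p q ps \<beta> lam (mpol (blk (uN N) T)) t)
            \<le> (real M / real T + 1) * (W (uN N) T s_init + Phi)" by (rule sum_bound_trunc[OF assms])
      fix t
      show "measure_pmf.expectation (mu Suc p q ps g (Suc t)) (ex N) \<le> eps N"
        unfolding eps_def by (rule Eex_bound, rule gact)
    qed
    finally show "(\<Sum>t<M. exp_stage Suc p q ps \<beta> lam (mpol g) t)
        \<le> (real M / real T + 1) * (W (uN N) T s_init + Phi) + real M * eps N" by simp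
  qed
  finally show ?thesis .
qed

lemma ex_nn: "0 \<le> ex N s"
  by (cases s) (auto simp: ex_def tau_def cost_def intro!: mult_left_mono b0 b1)

lemma W_tau: "W (uN N) k (tau N s) \<le> W Suc k s"
proof (induction k arbitrary: s)
  case 0 then show ?case by simp
next
  case (Suc k)
  have "Q (uN N) k (tau N s) a \<le> Q Suc k s a" for a
  proof -
    have "Q (uN N) k (tau N s) a = measure_pmf.expectation (map_pmf (tau N) (trans Suc p q ps s a))
        (\<lambda>s'. cost \<beta> s' + W (uN N) k s') + (if a then lam else 0)"
      by (simp add: Q_alt trans_tau)
    also have "\<dots> = measure_pmf.expectation (trans Suc p q ps s a)
        (\<lambda>s'. cost \<beta> (tau N s') + W (uN N) k (tau N s')) + (if a then lam else 0)"
      by simp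
    also have "\<dots> \<le> measure_pmf.expectation (trans Suc p q ps s a)
        (\<lambda>s'. cost \<beta> s' + W Suc k s') + (if a then lam else 0)"
      using Suc ex_nn by (intro add_right_mono exp_mono_fin[OF finite_trans] add_mono)
        (auto simp: ex_def)
    also have "\<dots> = Q Suc k s a" by (simp add: Q_alt)
    finally show ?thesis .
  qed
  then show ?case by (simp add: W_Suc) (smt (verit) min_def)
qed

lemma avg_nn: "0 \<le> avg_cost u p q ps \<beta> lam \<pi>"
  unfolding avg_cost_def
  by (rule le_Limsup) (auto intro!: always_eventually allI divide_nonneg_nonneg sum_nonneg exp_stage_nn)

lemma avg_lower:
  assumes "\<pi> \<in> admissible" and "\<And>T. 1 \<le> T \<Longrightarrow> a - b / real T \<le> W u T s_init / real T"
  shows "ereal a \<le> avg_cost u p q ps \<beta> lam \<pi>"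
  unfolding avg_cost_def
proof (rule limsup_lower[where b=b])
  fix M :: nat assume M: "1 \<le> M"
  have "W u M s_init / real M \<le> (\<Sum>t<M. exp_stage u p q ps \<beta> lam \<pi> t) / real M"
    using F1[OF assms(1)] by (intro divide_right_mono) auto
  then show "a - b / real M \<le> (\<Sum>t<M. exp_stage u p q ps \<beta> lam \<pi> t) / real M"
    using assms(2)[OF M] by linarith
qed

end


context prm begin

declare W.simps(2)[simp del]

lemma opt_nn: "0 \<le> opt_cost u p q ps \<beta> lam"
  unfolding opt_cost_def by (rule INF_greatest) (rule avg_nn)

lemma eps_lim: "eps \<longlonglongrightarrow> 0"
proof -
  have th1: "0 < th - 1" using th_gt1 by simp
  have e: "eps = (\<lambda>N. (2 * GG D0 / (th - 1)) * (1 / th) ^ N)"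
    by (rule ext) (simp add: eps_def power_one_over field_simps)
  have "(\<lambda>N. (1 / th) ^ N) \<longlonglongrightarrow> 0" using th_gt1 by (intro LIMSEQ_power_zero) simp
  then have "(\<lambda>N. (2 * GG D0 / (th - 1)) * (1 / th) ^ N) \<longlonglongrightarrow> (2 * GG D0 / (th - 1)) * 0"
    by (intro tendsto_mult tendsto_const)
  then show ?thesis unfolding e by simp
qed

theorem main: "(\<lambda>N. L_trunc N p q ps \<beta> lam) \<longlonglongrightarrow> L_orig p q ps \<beta> lam"
proof -
  define Lo where "Lo = L_orig p q ps \<beta> lam"
  have Lo0: "0 \<le> Lo" unfolding Lo_def L_orig_def by (rule opt_nn)
  have "Lo \<le> ereal ((W (uN D0) 1 s_init + Phi) / 1 + eps D0)"
    unfolding Lo_def using L_orig_upper[of D0 1] by simp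
  then obtain lo where lo: "Lo = ereal lo" using Lo0 by (cases Lo) auto
  have lo_up: "lo \<le> (W (uN N) T s_init + Phi) / T + eps N" if "D0 \<le> N" "0 < T" for N T
    using L_orig_upper[OF that] lo by (simp add: Lo_def)
  have sandw: "ereal (lo - eps N) \<le> L_trunc N p q ps \<beta> lam \<and> L_trunc N p q ps \<beta> lam \<le> Lo"
    if N: "D0 \<le> N" for N
  proof
    show "ereal (lo - eps N) \<le> L_trunc N p q ps \<beta> lam"
      unfolding L_trunc_eq opt_cost_def
    proof (rule INF_greatest)
      fix \<pi> assume \<pi>: "\<pi> \<in> admissible"
      show "ereal (lo - eps N) \<le> avg_cost (uN N) p q ps \<beta> lam \<pi>"
      proof (rule avg_lower[OF \<pi>, where b=Phi])
        fix T :: nat assume T: "1 \<le> T"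
        have "lo \<le> (W (uN N) T s_init + Phi) / T + eps N" using lo_up[OF N] T by simp
        then show "lo - eps N - Phi / real T \<le> W (uN N) T s_init / real T"
          by (simp add: add_divide_distrib)
      qed
    qed
    have Lt0: "0 \<le> L_trunc N p q ps \<beta> lam" unfolding L_trunc_eq by (rule opt_nn)
    have "L_trunc N p q ps \<beta> lam \<le> ereal ((W (uN N) 1 s_init + Phi) / 1)"
      using L_trunc_upper[OF N, of 1] by simp
    then obtain lt where lt: "L_trunc N p q ps \<beta> lam = ereal lt" using Lt0
      by (cases "L_trunc N p q ps \<beta> lam") auto
    have lt_up: "lt \<le> (W (uN N) T s_init + Phi) / T" if "0 < T" for T
      using L_trunc_upper[OF N that] lt by simp
    have "ereal lt \<le> Lo"
      unfolding Lo_def L_orig_def opt_cost_def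
    proof (rule INF_greatest)
      fix \<pi> assume \<pi>: "\<pi> \<in> admissible"
      show "ereal lt \<le> avg_cost Suc p q ps \<beta> lam \<pi>"
      proof (rule avg_lower[OF \<pi>, where b=Phi])
        fix T :: nat assume T: "1 \<le> T"
        have "lt \<le> (W (uN N) T s_init + Phi) / T" using lt_up T by simp
        moreover have "W (uN N) T s_init \<le> W Suc T s_init" using W_tau[of N T s_init] by simp
        ultimately have "lt \<le> (W Suc T s_init + Phi) / T" using T
          by (smt (verit) divide_right_mono of_nat_0_le_iff)
        then show "lt - Phi / real T \<le> W Suc T s_init / real T"
          by (simp add: add_divide_distrib)
      qed
    qed
    then show "L_trunc N p q ps \<beta> lam \<le> Lo" using lt by simp
  qed
  have lim1: "(\<lambda>N. ereal (lo - eps N)) \<longlonglongrightarrow> Lo"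
    unfolding lo using tendsto_diff[OF tendsto_const[of lo] eps_lim] by (simp add: tendsto_ereal)
  show ?thesis
    unfolding Lo_def[symmetric]
    by (rule tendsto_sandwich[OF _ _ lim1 tendsto_const])
       (use sandw in \<open>auto intro: eventually_sequentiallyI[of D0]\<close>)
qed

end

theorem theorem4:
  fixes p q ps \<beta> lam :: real
  assumes "0 < p" "p < 1" "0 < q" "q < 1" "0 < ps" "ps \<le> 1"
    and "0 \<le> \<beta>" "\<beta> \<le> 1" "0 \<le> lam"
  shows "(\<lambda>N. L_trunc N p q ps \<beta> lam) \<longlonglongrightarrow> L_orig p q ps \<beta> lam"
proof -
  interpret prm p q ps \<beta> lam using assms by unfold_locales
  show ?thesis by (rule main)
qed

end
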